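(* For every $n>1$ there are finite symmetric $\mathcal L_n$-structures $\mathcal X=\langle X;X_1,\dots,X_n\rangle$ and $\mathcal Y=\langle Y;Y_1,\dots,Y_n\rangle$ such that $\mathcal X$ and $\mathcal Y$ are not isomorphic, but their reducts $\langle X;X_1,\dots,X_{n-1}\rangle$ and $\langle Y;Y_1,\dots,Y_{n-1}\rangle$ to $\mathcal L_{n-1}$ are isomorphic.
   Context: For $n\in\mathbb N$, $\mathcal L_n$ is the first-order language $\{P_1,\dots,P_n\}$ of $n$ unary predicates ($\mathcal L_0$ is the language of pure equality). An $\mathcal L_n$-structure $\mathcal F=\langle F;F_1,\dots,F_n\rangle$ has $F_i$ the interpretation of $P_i$. For $n>1$, $\mathcal F$ is symmetric if for every permutation $\sigma\in\mathfrak S_n$ the structure $\mathcal F$ is isomorphic to $\langle F;F_{\sigma(1)},\dots,F_{\sigma(n)}\rangle$, i.e. there is a bijection $\tilde\sigma:F\to F$ with $\gamma\in F_i$ iff $\tilde\sigma(\gamma)\in F_{\sigma(i)}$. *)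

theory Defs
  imports "HOL-Combinatorics.Permutations"
begin

text \<open>An L_n-structure is represented by a carrier set F and a family of
unary predicates P :: nat => 'a set, where P i (for 1 <= i <= n) interprets P_i
and must be a subset of F. Values of P outside {1..n} are irrelevant.\<close>

definition ln_structure :: "nat \<Rightarrow> 'a set \<Rightarrow> (nat \<Rightarrow> 'a set) \<Rightarrow> bool" where
  "ln_structure n F P \<longleftrightarrow> (\<forall>i\<in>{1..n}. P i \<subseteq> F)"

definition ln_iso :: "nat \<Rightarrow> 'a set \<Rightarrow> (nat \<Rightarrow> 'a set) \<Rightarrow> 'b set \<Rightarrow> (nat \<Rightarrow> 'b set) \<Rightarrow> bool" where
  "ln_iso n F P G Q \<longleftrightarrow>
     (\<exists>f. bij_betw f F G \<and> (\<forall>i\<in>{1..n}. \<forall>x\<in>F. x \<in> P i \<longleftrightarrow> f x \<in> Q i))"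

definition ln_symmetric :: "nat \<Rightarrow> 'a set \<Rightarrow> (nat \<Rightarrow> 'a set) \<Rightarrow> bool" where
  "ln_symmetric n F P \<longleftrightarrow>
     (\<forall>\<sigma>. \<sigma> permutes {1..n} \<longrightarrow> ln_iso n F P F (\<lambda>i. P (\<sigma> i)))"

end

theory Submission
  imports Defs
begin

lemma iso_sym:
  assumes "ln_iso n F P G Q" shows "ln_iso n G Q F P"
proof -
  obtain f where f: "bij_betw f F G" "\<forall>i\<in>{1..n}. \<forall>x\<in>F. x \<in> P i \<longleftrightarrow> f x \<in> Q i"
    using assms unfolding ln_iso_def by blast
  have b: "bij_betw (inv_into F f) G F" using f(1) by (simp add: bij_betw_inv_into)
  have "\<forall>i\<in>{1..n}. \<forall>y\<in>G. y \<in> Q i \<longleftrightarrow> inv_into F f y \<in> P i"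
  proof (intro ballI)
    fix i y assume i: "i \<in> {1..n}" and y: "y \<in> G"
    have "inv_into F f y \<in> F" using b y by (meson bij_betwE)
    moreover have "f (inv_into F f y) = y" using f(1) y by (meson bij_betw_inv_into_right)
    ultimately show "y \<in> Q i \<longleftrightarrow> inv_into F f y \<in> P i" using f(2) i by metis
  qed
  then show ?thesis using b unfolding ln_iso_def by blast
qed

lemma iso_trans:
  assumes "ln_iso n F P G Q" "ln_iso n G Q H R" shows "ln_iso n F P H R"
proof -
  obtain f where f: "bij_betw f F G" "\<forall>i\<in>{1..n}. \<forall>x\<in>F. x \<in> P i \<longleftrightarrow> f x \<in> Q i"
    using assms(1) unfolding ln_iso_def by blast
  obtain g where g: "bij_betw g G H" "\<forall>i\<in>{1..n}. \<forall>x\<in>G. x \<in> Q i \<longleftrightarrow> g x \<in> R i"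
    using assms(2) unfolding ln_iso_def by blast
  have "bij_betw (g \<circ> f) F H" using f g bij_betw_trans by blast
  moreover have "\<forall>i\<in>{1..n}. \<forall>x\<in>F. x \<in> P i \<longleftrightarrow> (g \<circ> f) x \<in> R i"
    using f g by (metis bij_betwE comp_apply)
  ultimately show ?thesis unfolding ln_iso_def by blast
qed

lemma iso_perm:
  assumes "ln_iso n F P G Q" "\<sigma> permutes {1..n}"
  shows "ln_iso n F (\<lambda>i. P (\<sigma> i)) G (\<lambda>i. Q (\<sigma> i))"
  using assms unfolding ln_iso_def by (meson permutes_in_image)

lemma iso_symm:
  assumes "ln_iso n F P G Q" "ln_symmetric n F P" shows "ln_symmetric n G Q"
  unfolding ln_symmetric_def
proof (intro allI impI)
  fix \<sigma> assume s: "\<sigma> permutes {1..n}"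
  have a: "ln_iso n G Q F P" using iso_sym assms(1) .
  have b: "ln_iso n F P F (\<lambda>i. P (\<sigma> i))" using assms(2) s unfolding ln_symmetric_def by blast
  have c: "ln_iso n F (\<lambda>i. P (\<sigma> i)) G (\<lambda>i. Q (\<sigma> i))" using iso_perm assms(1) s .
  show "ln_iso n G Q G (\<lambda>i. Q (\<sigma> i))" by (rule iso_trans[OF iso_trans[OF a b] c])
qed

lemma iso_img:
  assumes "inj_on g F" shows "ln_iso m F P (g ` F) (\<lambda>i. g ` (P i \<inter> F))"
proof -
  have "bij_betw g F (g ` F)" using assms by (simp add: bij_betw_imageI)
  moreover have "\<forall>i\<in>{1..m}. \<forall>x\<in>F. x \<in> P i \<longleftrightarrow> g x \<in> g ` (P i \<inter> F)"
    using assms by (auto simp: inj_on_def)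
  ultimately show ?thesis unfolding ln_iso_def by blast
qed

lemma struct_img: "ln_structure m (g ` F) (\<lambda>i. g ` (P i \<inter> F))"
  unfolding ln_structure_def by auto

definition SA :: "nat \<Rightarrow> nat set set" where
  "SA n = {S. S \<subseteq> {1..n} \<and> even (card S)}"
definition SB :: "nat \<Rightarrow> nat set set" where
  "SB n = {S. S \<subseteq> {1..n} \<and> odd (card S)}"
definition PP :: "nat set set \<Rightarrow> nat \<Rightarrow> nat set set" where
  "PP A i = {S\<in>A. i \<in> S}"

lemma fin_SA: "finite (SA n)" unfolding SA_def
  by (rule finite_subset[of _ "Pow {1..n}"]) auto
lemma fin_SB: "finite (SB n)" unfolding SB_def
  by (rule finite_subset[of _ "Pow {1..n}"]) auto

lemma sym_gen:
  assumes "\<And>S. S \<in> A \<longleftrightarrow> S \<subseteq> {1..n} \<and> Pr (card S)"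
  shows "ln_symmetric n A (PP A)"
  unfolding ln_symmetric_def
proof (intro allI impI)
  fix \<sigma> assume s: "\<sigma> permutes {1..n}"
  have inj: "inj \<sigma>" by (rule permutes_inj[OF s])
  have si: "inv \<sigma> permutes {1..n}" by (rule permutes_inv[OF s])
  have inj2: "inj (inv \<sigma>)" by (rule permutes_inj[OF si])
  have img: "\<And>S. S \<subseteq> {1..n} \<Longrightarrow> \<sigma> ` S \<subseteq> {1..n}"
    using permutes_image[OF s] by blast
  have img2: "\<And>S. S \<subseteq> {1..n} \<Longrightarrow> inv \<sigma> ` S \<subseteq> {1..n}"
    using permutes_image[OF si] by blast
  have cd: "\<And>S. card (\<sigma> ` S) = card S" using inj by (simp add: card_image inj_on_subset)
  have cd2: "\<And>S. card (inv \<sigma> ` S) = card S" using inj2 by (simp add: card_image inj_on_subset)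
  have mapA: "\<sigma> ` S \<in> A" if "S \<in> A" for S
  proof -
    have "S \<subseteq> {1..n}" "Pr (card S)" using assms[of S] that by auto
    then show ?thesis using assms[of "\<sigma> ` S"] img[of S] cd[of S] by simp
  qed
  have mapA2: "inv \<sigma> ` S \<in> A" if "S \<in> A" for S
  proof -
    have "S \<subseteq> {1..n}" "Pr (card S)" using assms[of S] that by auto
    then show ?thesis using assms[of "inv \<sigma> ` S"] img2[of S] cd2[of S] by simp
  qed
  have inv1: "\<sigma> ` (inv \<sigma> ` S) = S" for S
    by (simp add: image_comp permutes_inverses(1)[OF s])
  have inv2: "inv \<sigma> ` (\<sigma> ` S) = S" for S
    by (simp add: image_comp permutes_inverses(2)[OF s])
  have b1: "bij_betw ((`) \<sigma>) A A"
    by (rule bij_betw_byWitness[where f' = "(`) (inv \<sigma>)"]) (use inv1 inv2 mapA mapA2 in auto)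
  have b2: "\<forall>i\<in>{1..n}. \<forall>x\<in>A. x \<in> PP A i \<longleftrightarrow> \<sigma> ` x \<in> PP A (\<sigma> i)"
  proof (intro ballI)
    fix i x assume "i \<in> {1..n}" "x \<in> A"
    have "\<sigma> ` x \<in> A" by (rule mapA[OF \<open>x \<in> A\<close>])
    moreover have "i \<in> x \<longleftrightarrow> \<sigma> i \<in> \<sigma> ` x" using inj by (simp add: inj_image_mem_iff)
    ultimately show "x \<in> PP A i \<longleftrightarrow> \<sigma> ` x \<in> PP A (\<sigma> i)" using \<open>x \<in> A\<close> unfolding PP_def by simp
  qed
  show "ln_iso n A (PP A) A (\<lambda>i. PP A (\<sigma> i))"
    unfolding ln_iso_def by (intro exI[of _ "(`) \<sigma>"] conjI b1 b2)
qed

lemma not_iso: assumes "n > 1" shows "\<not> ln_iso n (SA n) (PP (SA n)) (SB n) (PP (SB n))"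
proof
  assume "ln_iso n (SA n) (PP (SA n)) (SB n) (PP (SB n))"
  then obtain f where f: "bij_betw f (SA n) (SB n)"
    "\<forall>i\<in>{1..n}. \<forall>x\<in>SA n. x \<in> PP (SA n) i \<longleftrightarrow> f x \<in> PP (SB n) i"
    unfolding ln_iso_def by blast
  have e: "{} \<in> SA n" unfolding SA_def by auto
  then have fe: "f {} \<in> SB n" using f(1) bij_betwE by blast
  then have s1: "f {} \<subseteq> {1..n}" and s2: "odd (card (f {}))" unfolding SB_def by auto
  have "f {} \<noteq> {}" using s2 by (metis card.empty even_zero)
  then obtain i where i1: "i \<in> f {}" by blast
  then have i2: "i \<in> {1..n}" using s1 by blast
  have "f {} \<in> PP (SB n) i" unfolding PP_def using fe i1 by blast
  then have "{} \<in> PP (SA n) i" using f(2) i2 e by blast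
  then show False unfolding PP_def by blast
qed

lemma toggle_iso: assumes "n > 1" shows "ln_iso (n-1) (SA n) (PP (SA n)) (SB n) (PP (SB n))"
proof -
  let ?t = "\<lambda>S::nat set. if n \<in> S then S - {n} else insert n S"
  have tt: "\<And>S. ?t (?t S) = S" by auto
  have fin: "\<And>S. S \<subseteq> {1..n} \<Longrightarrow> finite S" by (rule finite_subset[OF _ finite_atLeastAtMost])
  have nin: "n \<in> {1..n}" using assms by auto
  have sub: "\<And>S. S \<subseteq> {1..n} \<Longrightarrow> ?t S \<subseteq> {1..n}" using nin by auto
  have par: "\<And>S. S \<subseteq> {1..n} \<Longrightarrow> even (card (?t S)) \<longleftrightarrow> odd (card S)"
  proof -
    fix S :: "nat set" assume "S \<subseteq> {1..n}"
    then have "finite S" using fin by blast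
    show "even (card (?t S)) \<longleftrightarrow> odd (card S)"
    proof (cases "n \<in> S")
      case True
      then have "card S = Suc (card (S - {n}))" using \<open>finite S\<close>
        by (metis card_Suc_Diff1)
      then show ?thesis using True by auto
    next
      case False then show ?thesis using \<open>finite S\<close> by auto
    qed
  qed
  have b1: "bij_betw ?t (SA n) (SB n)"
  proof (rule bij_betw_byWitness[where f' = ?t])
    show "\<forall>a\<in>SA n. ?t (?t a) = a" using tt by blast
    show "\<forall>a\<in>SB n. ?t (?t a) = a" using tt by blast
    show "?t ` SA n \<subseteq> SB n"
    proof
      fix y assume "y \<in> ?t ` SA n"
      then obtain S where S: "S \<in> SA n" "y = ?t S" by blast
      then have "S \<subseteq> {1..n}" unfolding SA_def by blast
      then show "y \<in> SB n" using S sub[of S] par[of S] unfolding SA_def SB_def by simp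
    qed
    show "?t ` SB n \<subseteq> SA n"
    proof
      fix y assume "y \<in> ?t ` SB n"
      then obtain S where S: "S \<in> SB n" "y = ?t S" by blast
      then have "S \<subseteq> {1..n}" unfolding SB_def by blast
      then show "y \<in> SA n" using S sub[of S] par[of S] unfolding SA_def SB_def by simp
    qed
  qed
  have b2: "\<forall>i\<in>{1..n-1}. \<forall>x\<in>SA n. x \<in> PP (SA n) i \<longleftrightarrow> ?t x \<in> PP (SB n) i"
  proof (intro ballI)
    fix i x assume i: "i \<in> {1..n-1}" and x: "x \<in> SA n"
    have "?t x \<in> SB n" using b1 x bij_betwE by blast
    moreover have "i \<noteq> n" using i by auto
    then have "i \<in> x \<longleftrightarrow> i \<in> ?t x" by simp
    ultimately show "x \<in> PP (SA n) i \<longleftrightarrow> ?t x \<in> PP (SB n) i" using x unfolding PP_def by simp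
  qed
  show ?thesis unfolding ln_iso_def by (intro exI[of _ ?t] conjI b1 b2)
qed

theorem lemma5p6:
  fixes n :: nat
  assumes "n > 1"
  shows "\<exists>(X :: nat set) XP (Y :: nat set) YP.
           finite X \<and> finite Y \<and>
           ln_structure n X XP \<and> ln_structure n Y YP \<and>
           ln_symmetric n X XP \<and> ln_symmetric n Y YP \<and>
           \<not> ln_iso n X XP Y YP \<and>
           ln_iso (n - 1) X XP Y YP"
proof -
  obtain g :: "nat set \<Rightarrow> nat" where g: "inj_on g (SA n)"
    using finite_imp_inj_to_nat_seg[OF fin_SA] by blast
  obtain h :: "nat set \<Rightarrow> nat" where h: "inj_on h (SB n)"
    using finite_imp_inj_to_nat_seg[OF fin_SB] by blast
  let ?X = "g ` SA n" and ?XP = "\<lambda>i. g ` (PP (SA n) i \<inter> SA n)"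
  let ?Y = "h ` SB n" and ?YP = "\<lambda>i. h ` (PP (SB n) i \<inter> SB n)"
  have ia: "\<And>m. ln_iso m (SA n) (PP (SA n)) ?X ?XP" by (rule iso_img[OF g])
  have ib: "\<And>m. ln_iso m (SB n) (PP (SB n)) ?Y ?YP" by (rule iso_img[OF h])
  have sa: "ln_symmetric n (SA n) (PP (SA n))" by (rule sym_gen[where Pr=even]) (simp add: SA_def)
  have sb: "ln_symmetric n (SB n) (PP (SB n))" by (rule sym_gen[where Pr=odd]) (simp add: SB_def)
  have c1: "\<not> ln_iso n ?X ?XP ?Y ?YP"
  proof
    assume "ln_iso n ?X ?XP ?Y ?YP"
    then have "ln_iso n (SA n) (PP (SA n)) ?Y ?YP" by (rule iso_trans[OF ia])
    then have "ln_iso n (SA n) (PP (SA n)) (SB n) (PP (SB n))" by (rule iso_trans[OF _ iso_sym[OF ib]])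
    then show False using not_iso[OF assms] by contradiction
  qed
  have c2: "ln_iso (n-1) ?X ?XP ?Y ?YP"
    by (rule iso_trans[OF iso_trans[OF iso_sym[OF ia] toggle_iso[OF assms]] ib])
  have c3: "ln_symmetric n ?X ?XP" by (rule iso_symm[OF ia sa])
  have c4: "ln_symmetric n ?Y ?YP" by (rule iso_symm[OF ib sb])
  have c5: "finite ?X" by (rule finite_imageI[OF fin_SA])
  have c6: "finite ?Y" by (rule finite_imageI[OF fin_SB])
  show ?thesis
    by (intro exI[of _ ?X] exI[of _ ?XP] exI[of _ ?Y] exI[of _ ?YP] conjI c1 c2 c3 c4 c5 c6 struct_img)
qed

end
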